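(* Let $(X,d)$ be an Atsuji space and $f:X\to X$ a closed mapping. If there exists $x_0\in X$ such that $\liminf_{n\to\infty} d(f^n(x_0),f^{n+1}(x_0))=0$, then $f$ has a fixed point.
   Context: A metric space $(X,d)$ is an Atsuji space if for each open cover $\mathcal{U}$ of $X$ there exists $\varepsilon>0$ such that for every $x\in X$ the open ball $B_d(x,\varepsilon)$ is contained in some element of $\mathcal{U}$. A mapping is closed if it maps closed sets to closed sets (continuity is not assumed). $f^n$ denotes the $n$-fold iterate of $f$. *)

theory Defs
  imports "HOL-Analysis.Analysis"
begin

text \<open>The whole type 'a (a metric space) is the space X. Atsuji space: every open
cover has a uniform Lebesgue number.\<close>
definition atsuji_space :: "'a::metric_space itself \<Rightarrow> bool" where
  "atsuji_space _ \<longleftrightarrow>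
     (\<forall>\<U> :: 'a set set. (\<forall>U\<in>\<U>. open U) \<and> \<Union>\<U> = UNIV \<longrightarrow>
        (\<exists>e>0. \<forall>x. \<exists>U\<in>\<U>. ball x e \<subseteq> U))"

definition closed_mapping :: "('a::topological_space \<Rightarrow> 'b::topological_space) \<Rightarrow> bool" where
  "closed_mapping f \<longleftrightarrow> (\<forall>S. closed S \<longrightarrow> closed (f ` S))"

end

theory Submission
  imports Defs
begin

theorem corollary7:
  fixes f :: "'a::metric_space \<Rightarrow> 'a" and x0 :: 'a
  assumes "atsuji_space TYPE('a)"
    and "closed_mapping f"
    and "liminf (\<lambda>n. ereal (dist ((f ^^ n) x0) ((f ^^ Suc n) x0))) = 0"
  shows "\<exists>x. f x = x"
proof (rule ccontr)
  assume "\<not> (\<exists>x. f x = x)"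
  then have nf: "\<And>y. f y \<noteq> y" by blast
  define x where "x n = (f ^^ n) x0" for n
  have xs: "x (Suc n) = f (x n)" for n by (simp add: x_def)
  have small: "\<exists>n\<ge>N. dist (x n) (x (Suc n)) < e" if "e > 0" for e N
  proof -
    have "(INF m\<in>{N..}. ereal (dist (x m) (x (Suc m)))) \<le> 0"
      using assms(3) unfolding liminf_SUP_INF x_def
      by (metis (no_types, lifting) SUP_upper UNIV_I)
    also have "\<dots> < ereal e" using that by simp
    finally obtain n where "n \<in> {N..}" "ereal (dist (x n) (x (Suc n))) < ereal e"
      unfolding INF_less_iff by blast
    then show ?thesis by auto
  qed
  have injx: "inj x"
  proof (rule ccontr)
    assume "\<not> inj x"
    then obtain i j where ij: "i < j" "x i = x j"
      unfolding inj_def by (metis linorder_neqE_nat)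
    have per: "\<exists>k\<in>{i..<j}. x n = x k" if "n \<ge> i" for n
      using that
    proof (induction n rule: dec_induct)
      case base then show ?case using ij(1) by auto
    next
      case (step n)
      then obtain k where k: "k \<in> {i..<j}" "x n = x k" by blast
      show ?case
      proof (cases "Suc k < j")
        case True then show ?thesis using k xs by (metis atLeastLessThan_iff le_Suc_eq)
      next
        case False
        then have "Suc k = j" using k by auto
        then show ?thesis using k xs ij by (metis atLeastLessThan_iff order_refl)
      qed
    qed
    define D where "D = (\<lambda>k. dist (x k) (x (Suc k))) ` {i..<j}"
    have fD: "finite D" "D \<noteq> {}" using ij by (auto simp: D_def)
    have Dpos: "\<forall>d\<in>D. d > 0" using nf xs by (auto simp: D_def) (metis nf)
    have "Min D > 0" using fD Dpos by simp
    then obtain n where n: "n \<ge> i" "dist (x n) (x (Suc n)) < Min D" using small by blast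
    then obtain k where k: "k \<in> {i..<j}" "x n = x k" using per by blast
    then have "dist (x n) (x (Suc n)) \<in> D" unfolding D_def using xs by auto
    then show False using n fD by (meson Min_le not_le)
  qed
  show False
  proof (cases "\<exists>p. \<forall>e>0. \<forall>N. \<exists>n\<ge>N. dist (x n) p < e \<and> dist (x n) (x (Suc n)) < e")
    case True
    then obtain p where p: "\<And>e N. e > 0 \<Longrightarrow> \<exists>n\<ge>N. dist (x n) p < e \<and> dist (x n) (x (Suc n)) < e"
      by blast
    obtain N0 where N0: "\<And>n. n \<ge> N0 \<Longrightarrow> x (Suc n) \<noteq> p"
    proof (cases "\<exists>m. x m = p")
      case True
      then obtain m where "x m = p" by blast
      then show ?thesis using injx that[of m] by (metis Suc_le_eq inj_eq less_irrefl)
    next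
      case False then show ?thesis using that by blast
    qed
    have "\<forall>k. \<exists>n\<ge>N0. dist (x n) p < inverse (real (Suc k)) \<and> dist (x n) (x (Suc n)) < inverse (real (Suc k))"
      using p by simp
    then obtain nk where nk: "\<And>k. nk k \<ge> N0" "\<And>k. dist (x (nk k)) p < inverse (real (Suc k))"
      "\<And>k. dist (x (nk k)) (x (Suc (nk k))) < inverse (real (Suc k))"
      by metis
    have lim: "(\<lambda>k. x (nk k)) \<longlonglongrightarrow> p"
      unfolding lim_sequentially
    proof (intro allI impI)
      fix r :: real assume "r > 0"
      then obtain k0 where k0: "inverse (real (Suc k0)) < r" using reals_Archimedean by blast
      have "dist (x (nk k)) p < r" if "k \<ge> k0" for k
      proof -
        have "inverse (real (Suc k)) \<le> inverse (real (Suc k0))"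
          using that by (simp add: le_imp_inverse_le)
        then show ?thesis using nk(2)[of k] k0 by linarith
      qed
      then show "\<exists>no. \<forall>k\<ge>no. dist (x (nk k)) p < r" by blast
    qed
    define C where "C = insert p (range (\<lambda>k. x (nk k)))"
    have lim2: "limitin euclidean (\<lambda>k. x (nk k)) p sequentially"
      using lim by (simp only: limitin_canonical_iff)
    have "compactin euclidean (insert p (range (\<lambda>k. x (nk k))))"
      by (rule compactin_sequence_with_limit[OF lim2]) simp_all
    then have "closed C" unfolding C_def using compact_imp_closed compactin_euclidean_iff by blast
    then have cl: "closed (f ` C)" using assms(2) unfolding closed_mapping_def by blast
    have fC: "f ` C = insert (f p) (range (\<lambda>k. x (Suc (nk k))))" unfolding C_def using xs by auto
    have "p \<notin> f ` C"
    proof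
      assume "p \<in> f ` C"
      then have "p = f p \<or> (\<exists>k. p = x (Suc (nk k)))" unfolding fC by blast
      then show False using nf N0 nk(1) by metis
    qed
    then have "open (- f ` C)" "p \<in> - f ` C" using cl by auto
    then obtain r where r: "r > 0" "ball p r \<subseteq> - f ` C" using open_contains_ball by blast
    then obtain k where k: "inverse (real (Suc k)) < r / 2" using reals_Archimedean
      by (metis half_gt_zero)
    have "dist p (x (Suc (nk k))) \<le> dist (x (nk k)) p + dist (x (nk k)) (x (Suc (nk k)))"
      by (metis dist_commute dist_triangle)
    also have "\<dots> < r" using nk(2)[of k] nk(3)[of k] k by linarith
    finally have "x (Suc (nk k)) \<in> ball p r" by simp
    moreover have "x (Suc (nk k)) \<in> f ` C" unfolding fC by blast
    ultimately show False using r by blast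
  next
    case False
    then have "\<forall>p. \<exists>e N. e > 0 \<and> (\<forall>n\<ge>N. dist (x n) p < e \<longrightarrow> dist (x n) (x (Suc n)) \<ge> e)"
      by (meson not_le)
    then obtain E Nf where EN: "\<And>p. E p > 0"
      "\<And>p n. n \<ge> Nf p \<Longrightarrow> dist (x n) p < E p \<Longrightarrow> dist (x n) (x (Suc n)) \<ge> E p"
      by metis
    define U where "U p = ball p (min (E p / 3) (dist p (f p) / 2)) - (x ` {..<Nf p} - {p})" for p
    have openU: "open (U p)" for p
      unfolding U_def by (intro open_Diff finite_imp_closed) auto
    have pU: "p \<in> U p" for p
      using EN(1)[of p] nf[of p] unfolding U_def by auto
    have "\<exists>e>0. \<forall>y. \<exists>V\<in>range U. ball y e \<subseteq> V"
      using assms(1) unfolding atsuji_space_def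
      apply (elim allE[of _ "range U"])
      using openU pU by blast
    then obtain e where e: "e > 0" "\<And>y. \<exists>V\<in>range U. ball y e \<subseteq> V" by blast
    obtain n where n: "dist (x n) (x (Suc n)) < e" using small[OF e(1)] by blast
    obtain p where "ball (x n) e \<subseteq> U p" using e(2)[of "x n"] by blast
    then have in1: "x n \<in> U p" and in2: "x (Suc n) \<in> U p" using n e(1) by auto
    have d1: "dist p (x n) < E p / 3" "dist p (x (Suc n)) < E p / 3"
      using in1 in2 unfolding U_def by auto
    show False
    proof (cases "n < Nf p")
      case True
      then have "x n = p" using in1 unfolding U_def by auto
      then have "x (Suc n) = f p" using xs by simp
      then show False using in2 unfolding U_def by auto
    next
      case False
      then have "dist (x n) (x (Suc n)) \<ge> E p"
        using EN(2)[of p n] d1 EN(1)[of p] by (simp add: dist_commute)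
      moreover have "dist (x n) (x (Suc n)) \<le> dist p (x n) + dist p (x (Suc n))"
        by (rule dist_triangle3)
      ultimately show False using d1 EN(1)[of p] by linarith
    qed
  qed
qed

end
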